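(* Let $X$ be a completely regular I-favorable space and let $\mathcal T$ be the family of all cozero subsets of $X$. Let $\mathcal C$ be a $\mathcal T$-club (defined in the context). For $\mathcal P\subseteq\mathcal R$ in $\mathcal C$ define $q^{\mathcal R}_{\mathcal P}:X/\mathcal R\to X/\mathcal P$ by $q^{\mathcal R}_{\mathcal P}([x]_{\mathcal R})=[x]_{\mathcal P}$, where each $X/\mathcal P$ carries the $\mathcal Q_{\mathcal P}$-topology. Then the limit $Y=\varprojlim\{X/\mathcal R,q^{\mathcal R}_{\mathcal P},\mathcal C\}$ (with $\mathcal C$ directed by inclusion) contains a dense subspace homeomorphic to $X$.
   Context: For a family $\mathcal P$ of subsets of a set $X$ and $x\in X$, $[x]_{\mathcal P}=\{y\in X: \text{for every }V\in\mathcal P,\ x\in V\iff y\in V\}$; $X/\mathcal P$ is the set of all classes $[x]_{\mathcal P}$, and $q_{\mathcal P}:X\to X/\mathcal P$, $q_{\mathcal P}(x)=[x]_{\mathcal P}$, is the $\mathcal Q_{\mathcal P}$-map. The $\mathcal Q_{\mathcal P}$-topology on $X/\mathcal P$ is the coarsest topology containing all sets $q_{\mathcal P}[V]$, $V\in\mathcal P$. For a family $\mathcal R$ of subsets of $X$, $\mathcal R_{seq}$ is the family of all sets $W$ for which there are $\{U_n\}_{n\in\omega}\subseteq\mathcal R$ and $\{V_n\}_{n\in\omega}\subseteq\mathcal R$ with $U_k\subseteq X\setminus V_k\subseteq U_{k+1}$ for all $k$ and $\bigcup_n U_n=W$. Open-open game: at inning $n$ Player I chooses a non-empty open $A_n$,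 Player II a non-empty open $B_n\subseteq A_n$; Player I wins if $\bigcup_n B_n$ is dense; $X$ is I-favorable if Player I has a winning strategy. A strategy is a function $\sigma$ on finite sequences (including the empty one) of members of a family of sets with values in that family; a family $\mathcal P$ is closed under $\sigma$ if $\sigma(\emptyset)\in\mathcal P$ and $\sigma(B_0,\dots,B_n)\in\mathcal P$ whenever $B_0,\dots,B_n\in\mathcal P$. $\mathcal T$-club: for each $W\in\mathcal T$ fix sequences $\{U^W_n\},\{V^W_n\}\subseteq\mathcal T$ witnessing $W\in\mathcal T_{seq}$ (possible since $W=f^{-1}((0,1])$ for a continuous $f:X\to[0,1]$). Choose $\sigma^*_k(\emptyset)\in\mathcal T$ for each $k$, put $\sigma^*_{2n}(W)=U^W_n$, $\sigma^*_{2n+1}(W)=V^W_n$ and $\sigma^*_k(S)=\sigma^*_k(\emptyset)$ for all other finite sequences $S$. Let also $\sigma_\cup(A_0,\dots,A_n)=A_0\cup\dots\cup A_n$ and $\sigma_\cap(A_0,\dots,A_n)=A_0\cap\dots\cap A_n$, and fix a winning strategy for Player I with values in $\mathcal T$. For a countable $\mathcal Q\subseteq\mathcal T$ let $\mathcal P(\mathcal Q)$ be the smallest family with $\mathcal Q\subseteq\mathcal P(\mathcal Q)\subseteq\mathcal T$ closed under this winning strategy, all $\sigma^*_k$, $\sigma_\cup$ and $\sigma_\cap$. A $\mathcal T$-club is the collection $\mathcal C=\{\mathcal P(\mathcal Q):\mathcal Q\subseteq\mathcal T\text{ countable}\}$; each member is countable, a ring of sets (closed under finite unions and intersections), contained in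 its own $seq$-family and closed under a winning strategy for Player I. *)

theory Defs
  imports "HOL-Analysis.Analysis"
begin

definition cozero_sets :: "'a topology \<Rightarrow> 'a set set" where
  "cozero_sets X = {{x \<in> topspace X. f x \<noteq> 0} | f. continuous_map X euclideanreal f}"

text \<open>A play consistent with the strategy: Player I plays
  sigma of the moves of Player II so far, Player II answers with a non-empty open
  subset.\<close>
definition I_winning_strategy :: "'a topology \<Rightarrow> ('a set list \<Rightarrow> 'a set) \<Rightarrow> bool" where
  "I_winning_strategy X \<sigma> \<longleftrightarrow>
     (\<forall>S. (\<forall>B\<in>set S. openin X B \<and> B \<noteq> {}) \<longrightarrow> openin X (\<sigma> S) \<and> \<sigma> S \<noteq> {}) \<and>
     (\<forall>B :: nat \<Rightarrow> 'a set.
        (\<forall>n. openin X (B n) \<and> B n \<noteq> {} \<and> B n \<subseteq> \<sigma> (map B [0..<n]))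
        \<longrightarrow> X closure_of (\<Union>n. B n) = topspace X)"

definition I_favorable :: "'a topology \<Rightarrow> bool" where
  "I_favorable X \<longleftrightarrow> (\<exists>\<sigma>. I_winning_strategy X \<sigma>)"

definition I_winning_strategy_in :: "'a topology \<Rightarrow> 'a set set \<Rightarrow> ('a set list \<Rightarrow> 'a set) \<Rightarrow> bool" where
  "I_winning_strategy_in X \<T> \<sigma> \<longleftrightarrow>
     (\<forall>S. set S \<subseteq> \<T> \<longrightarrow> \<sigma> S \<in> \<T>) \<and>
     (\<forall>S. (\<forall>B\<in>set S. B \<in> \<T> \<and> B \<noteq> {}) \<longrightarrow> \<sigma> S \<noteq> {}) \<and>
     (\<forall>B :: nat \<Rightarrow> 'a set.
        (\<forall>n. B n \<in> \<T> \<and> B n \<noteq> {} \<and> B n \<subseteq> \<sigma> (map B [0..<n]))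
        \<longrightarrow> X closure_of (\<Union>n. B n) = topspace X)"

definition closed_under_strategy :: "'a set set \<Rightarrow> ('a set list \<Rightarrow> 'a set) \<Rightarrow> bool" where
  "closed_under_strategy \<P> \<sigma> \<longleftrightarrow> \<sigma> [] \<in> \<P> \<and> (\<forall>S. S \<noteq> [] \<and> set S \<subseteq> \<P> \<longrightarrow> \<sigma> S \<in> \<P>)"

definition closed_under_sigma_union_inter :: "'a set set \<Rightarrow> bool" where
  "closed_under_sigma_union_inter \<P> \<longleftrightarrow>
     (\<forall>S. S \<noteq> [] \<and> set S \<subseteq> \<P> \<longrightarrow> \<Union>(set S) \<in> \<P> \<and> \<Inter>(set S) \<in> \<P>)"

definition seq_witness :: "'a topology \<Rightarrow> 'a set set \<Rightarrow> 'a set \<Rightarrow> (nat \<Rightarrow> 'a set) \<Rightarrow> (nat \<Rightarrow> 'a set) \<Rightarrow> bool" where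
  "seq_witness X \<R> W U V \<longleftrightarrow>
     (\<forall>n. U n \<in> \<R> \<and> V n \<in> \<R>) \<and>
     (\<forall>k. U k \<subseteq> topspace X - V k \<and> topspace X - V k \<subseteq> U (Suc k)) \<and>
     (\<Union>n. U n) = W"

definition sigma_star ::
  "'a set set \<Rightarrow> ('a set \<Rightarrow> nat \<Rightarrow> 'a set) \<Rightarrow> ('a set \<Rightarrow> nat \<Rightarrow> 'a set) \<Rightarrow> (nat \<Rightarrow> 'a set)
     \<Rightarrow> nat \<Rightarrow> 'a set list \<Rightarrow> 'a set" where
  "sigma_star \<T> U V e k S =
     (case S of
        [W] \<Rightarrow> (if W \<in> \<T> then (if even k then U W (k div 2) else V W (k div 2)) else e k)
      | _ \<Rightarrow> e k)"

definition club_family ::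
  "'a set set \<Rightarrow> ('a set list \<Rightarrow> 'a set) \<Rightarrow> ('a set \<Rightarrow> nat \<Rightarrow> 'a set) \<Rightarrow> ('a set \<Rightarrow> nat \<Rightarrow> 'a set)
     \<Rightarrow> (nat \<Rightarrow> 'a set) \<Rightarrow> 'a set set \<Rightarrow> 'a set set" where
  "club_family \<T> \<sigma> U V e \<Q> =
     \<Inter>{\<P>. \<Q> \<subseteq> \<P> \<and> \<P> \<subseteq> \<T> \<and> closed_under_strategy \<P> \<sigma>
          \<and> (\<forall>k. closed_under_strategy \<P> (sigma_star \<T> U V e k))
          \<and> closed_under_sigma_union_inter \<P>}"

definition is_T_club :: "'a topology \<Rightarrow> 'a set set set \<Rightarrow> bool" where
  "is_T_club X \<C> \<longleftrightarrow>
     (\<exists>\<sigma> U V e.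
        (\<forall>W\<in>cozero_sets X. seq_witness X (cozero_sets X) W (U W) (V W)) \<and>
        (\<forall>k. e k \<in> cozero_sets X) \<and>
        I_winning_strategy_in X (cozero_sets X) \<sigma> \<and>
        \<C> = {club_family (cozero_sets X) \<sigma> U V e \<Q> | \<Q>. countable \<Q> \<and> \<Q> \<subseteq> cozero_sets X})"

definition pclass :: "'a topology \<Rightarrow> 'a set set \<Rightarrow> 'a \<Rightarrow> 'a set" where
  "pclass X \<P> x = {y \<in> topspace X. \<forall>V\<in>\<P>. x \<in> V \<longleftrightarrow> y \<in> V}"

definition pquot :: "'a topology \<Rightarrow> 'a set set \<Rightarrow> 'a set set" where
  "pquot X \<P> = pclass X \<P> ` topspace X"

definition QP_topology :: "'a topology \<Rightarrow> 'a set set \<Rightarrow> 'a set topology" where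
  "QP_topology X \<P> =
     topology_generated_by (insert (pquot X \<P>) ((\<lambda>V. pclass X \<P> ` V) ` \<P>))"

definition bond_map :: "'a topology \<Rightarrow> 'a set set \<Rightarrow> 'a set \<Rightarrow> 'a set" where
  "bond_map X \<P> c = pclass X \<P> (SOME x. x \<in> c)"

definition inverse_limit :: "'a topology \<Rightarrow> 'a set set set \<Rightarrow> ('a set set \<Rightarrow> 'a set) topology" where
  "inverse_limit X \<C> =
     subtopology (product_topology (\<lambda>\<P>. QP_topology X \<P>) \<C>)
       {y. \<forall>\<P>\<in>\<C>. \<forall>\<R>\<in>\<C>. \<P> \<subseteq> \<R> \<longrightarrow> bond_map X \<P> (y \<R>) = y \<P>}"

end

theory Submission
  imports Defs
begin

lemma cozero_subset: "W \<in> cozero_sets X \<Longrightarrow> W \<subseteq> topspace X"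
  by (auto simp: cozero_sets_def)

lemma cozero_open: assumes "W \<in> cozero_sets X" shows "openin X W"
proof -
  obtain f where f: "continuous_map X euclideanreal f" and W: "W = {x \<in> topspace X. f x \<noteq> 0}"
    using assms by (auto simp: cozero_sets_def)
  have "openin X {x \<in> topspace X. f x \<in> - {0}}"
    by (rule openin_continuous_map_preimage[OF f]) auto
  then show ?thesis using W by simp
qed

lemma cozero_Int: assumes "A \<in> cozero_sets X" "B \<in> cozero_sets X" shows "A \<inter> B \<in> cozero_sets X"
proof -
  obtain f where f: "continuous_map X euclideanreal f" and A: "A = {x \<in> topspace X. f x \<noteq> 0}"
    using assms by (auto simp: cozero_sets_def)
  obtain g where g: "continuous_map X euclideanreal g" and B: "B = {x \<in> topspace X. g x \<noteq> 0}"
    using assms by (auto simp: cozero_sets_def)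
  have "continuous_map X euclideanreal (\<lambda>x. f x * g x)" using f g by (intro continuous_intros)
  moreover have "A \<inter> B = {x \<in> topspace X. f x * g x \<noteq> 0}" using A B by auto
  ultimately show ?thesis unfolding cozero_sets_def
    by (intro CollectI exI[of _ "\<lambda>x. f x * g x"] conjI) auto
qed

lemma cozero_Un: assumes "A \<in> cozero_sets X" "B \<in> cozero_sets X" shows "A \<union> B \<in> cozero_sets X"
proof -
  obtain f where f: "continuous_map X euclideanreal f" and A: "A = {x \<in> topspace X. f x \<noteq> 0}"
    using assms by (auto simp: cozero_sets_def)
  obtain g where g: "continuous_map X euclideanreal g" and B: "B = {x \<in> topspace X. g x \<noteq> 0}"
    using assms by (auto simp: cozero_sets_def)
  have "continuous_map X euclideanreal (\<lambda>x. f x * f x + g x * g x)" using f g by (intro continuous_intros)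
  moreover have "A \<union> B = {x \<in> topspace X. f x * f x + g x * g x \<noteq> 0}"
    using A B by (auto simp: sum_squares_eq_zero_iff)
  ultimately show ?thesis unfolding cozero_sets_def
    by (intro CollectI exI[of _ "\<lambda>x. f x * f x + g x * g x"] conjI) auto
qed

lemma cozero_list: "S \<noteq> [] \<Longrightarrow> set S \<subseteq> cozero_sets X \<Longrightarrow> \<Union>(set S) \<in> cozero_sets X \<and> \<Inter>(set S) \<in> cozero_sets X"
proof (induction S)
  case Nil then show ?case by simp
next
  case (Cons a S)
  show ?case
  proof (cases "S = []")
    case True then show ?thesis using Cons by simp
  next
    case False then show ?thesis using Cons by (auto intro: cozero_Un cozero_Int)
  qed
qed

lemma cozero_nbhd:
  assumes "completely_regular_space X" "openin X U" "x \<in> U"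
  shows "\<exists>W \<in> cozero_sets X. x \<in> W \<and> W \<subseteq> U"
proof -
  have "closedin X (topspace X - U)" using assms by auto
  moreover have "x \<in> topspace X - (topspace X - U)" using assms openin_subset by fastforce
  ultimately obtain f :: "'a \<Rightarrow> real" where f: "continuous_map X (top_of_set {0..1}) f"
    and fx: "f x = 0" and f1: "f ` (topspace X - U) \<subseteq> {1}"
    using assms(1) unfolding completely_regular_space_def by blast
  have fc: "continuous_map X euclideanreal f" using f continuous_map_in_subtopology by blast
  have "continuous_map X euclideanreal (\<lambda>y. 1 - f y)" using fc by (intro continuous_intros)
  then have "{y \<in> topspace X. 1 - f y \<noteq> 0} \<in> cozero_sets X" unfolding cozero_sets_def
    by (intro CollectI exI[of _ "\<lambda>y. 1 - f y"] conjI) auto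
  moreover have "x \<in> {y \<in> topspace X. 1 - f y \<noteq> 0}" using fx assms openin_subset by fastforce
  moreover have "{y \<in> topspace X. 1 - f y \<noteq> 0} \<subseteq> U" using f1 by (auto simp: image_subset_iff)
  ultimately show ?thesis by (intro bexI[of _ "{y \<in> topspace X. 1 - f y \<noteq> 0}"] conjI)
qed

lemma club_mono: "Q \<subseteq> Q' \<Longrightarrow> club_family T \<sigma> U V e Q \<subseteq> club_family T \<sigma> U V e Q'"
  unfolding club_family_def by blast

lemma club_sup: "Q \<subseteq> club_family T \<sigma> U V e Q"
  unfolding club_family_def by blast

lemma club_sub:
  assumes "\<forall>W\<in>cozero_sets X. seq_witness X (cozero_sets X) W (U W) (V W)"
    "\<forall>k. e k \<in> cozero_sets X" "I_winning_strategy_in X (cozero_sets X) \<sigma>" "Q \<subseteq> cozero_sets X"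
  shows "club_family (cozero_sets X) \<sigma> U V e Q \<subseteq> cozero_sets X"
proof -
  let ?T = "cozero_sets X"
  have 1: "closed_under_strategy ?T \<sigma>" using assms(3)
    unfolding I_winning_strategy_in_def closed_under_strategy_def by auto
  have 2: "sigma_star ?T U V e k S \<in> ?T" for k S
    using assms(1,2) by (auto simp: sigma_star_def seq_witness_def split: list.split)
  have 3: "closed_under_sigma_union_inter ?T"
    unfolding closed_under_sigma_union_inter_def using cozero_list by blast
  have "?T \<in> {\<P>. Q \<subseteq> \<P> \<and> \<P> \<subseteq> ?T \<and> closed_under_strategy \<P> \<sigma>
          \<and> (\<forall>k. closed_under_strategy \<P> (sigma_star ?T U V e k))
          \<and> closed_under_sigma_union_inter \<P>}"
    using 1 2 3 assms(4) by (auto simp: closed_under_strategy_def)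
  then show ?thesis unfolding club_family_def by blast
qed

lemma pclass_self: "x \<in> topspace X \<Longrightarrow> x \<in> pclass X P x"
  by (simp add: pclass_def)

lemma pclass_eq_iff: "x \<in> topspace X \<Longrightarrow> y \<in> topspace X \<Longrightarrow>
   pclass X P x = pclass X P y \<longleftrightarrow> (\<forall>V\<in>P. x \<in> V \<longleftrightarrow> y \<in> V)"
proof
  assume x: "x \<in> topspace X" and y: "y \<in> topspace X" and e: "pclass X P x = pclass X P y"
  have "y \<in> pclass X P x" using e pclass_self[OF y] by simp
  then show "\<forall>V\<in>P. x \<in> V \<longleftrightarrow> y \<in> V" by (simp add: pclass_def)
next
  assume "\<forall>V\<in>P. x \<in> V \<longleftrightarrow> y \<in> V"
  then show "pclass X P x = pclass X P y" by (auto simp: pclass_def)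
qed

lemma pclass_mem_image: "x \<in> topspace X \<Longrightarrow> V \<subseteq> topspace X \<Longrightarrow> V \<in> P \<Longrightarrow>
   pclass X P x \<in> pclass X P ` V \<longleftrightarrow> x \<in> V"
proof
  assume x: "x \<in> topspace X" and V: "V \<subseteq> topspace X" "V \<in> P" and "pclass X P x \<in> pclass X P ` V"
  then obtain v where "v \<in> V" "pclass X P x = pclass X P v" by auto
  then show "x \<in> V" using pclass_eq_iff[OF x, of v P] V by auto
qed auto

lemma bond_pclass:
  assumes "x \<in> topspace X" "P \<subseteq> R"
  shows "bond_map X P (pclass X R x) = pclass X P x"
proof -
  define z where "z = (SOME z. z \<in> pclass X R x)"
  have "z \<in> pclass X R x" unfolding z_def by (rule someI, rule pclass_self[OF assms(1)])
  then have z: "z \<in> topspace X" "\<forall>V\<in>R. x \<in> V \<longleftrightarrow> z \<in> V" by (auto simp: pclass_def)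
  have "pclass X P z = pclass X P x"
    using pclass_eq_iff[OF z(1) assms(1)] z(2) assms(2) by blast
  then show ?thesis unfolding bond_map_def z_def by simp
qed

lemma QP_topspace:
  assumes "P \<subseteq> cozero_sets X"
  shows "topspace (QP_topology X P) = pquot X P"
  using assms cozero_subset unfolding QP_topology_def pquot_def by fastforce


theorem theorem8:
  fixes X :: "'a topology" and \<C> :: "'a set set set"
  assumes "completely_regular_space X" and "t1_space X"
    and "I_favorable X"
    and "is_T_club X \<C>"
  shows "\<exists>D. D \<subseteq> topspace (inverse_limit X \<C>)
           \<and> (inverse_limit X \<C>) closure_of D = topspace (inverse_limit X \<C>)
           \<and> subtopology (inverse_limit X \<C>) D homeomorphic_space X"
proof -
  let ?T = "cozero_sets X"
  obtain \<sigma> U V e where UV: "\<forall>W\<in>?T. seq_witness X ?T W (U W) (V W)"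
    and e: "\<forall>k. e k \<in> ?T" and \<sigma>: "I_winning_strategy_in X ?T \<sigma>"
    and C: "\<C> = {club_family ?T \<sigma> U V e \<Q> | \<Q>. countable \<Q> \<and> \<Q> \<subseteq> ?T}"
    using assms(4) unfolding is_T_club_def by blast
  define cl where "cl = club_family ?T \<sigma> U V e"
  have clC: "cl Q \<in> \<C>" if "countable Q" "Q \<subseteq> ?T" for Q
    using that C cl_def by blast
  have CT: "P \<subseteq> ?T" if "P \<in> \<C>" for P
    using that C club_sub[OF UV e \<sigma>] by auto
  have clsup: "Q \<subseteq> cl Q" for Q unfolding cl_def by (rule club_sup)
  have top: "topspace (QP_topology X P) = pquot X P" if "P \<in> \<C>" for P
    using QP_topspace CT that by blast
  define h where "h x = restrict (\<lambda>P. pclass X P x) \<C>" for x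
  define Lset where "Lset = {y. \<forall>\<P>\<in>\<C>. \<forall>\<R>\<in>\<C>. \<P> \<subseteq> \<R> \<longrightarrow> bond_map X \<P> (y \<R>) = y \<P>}"
  define Prod where "Prod = product_topology (\<lambda>\<P>. QP_topology X \<P>) \<C>"
  have L: "inverse_limit X \<C> = subtopology Prod Lset"
    unfolding inverse_limit_def Prod_def Lset_def by simp
  define D where "D = h ` topspace X"
  have hProd: "h x \<in> topspace Prod" if "x \<in> topspace X" for x
    using that top unfolding Prod_def h_def pquot_def by (auto simp: PiE_iff)
  have hL: "h x \<in> Lset" if "x \<in> topspace X" for x
    unfolding Lset_def h_def by (simp add: bond_pclass[OF that])
  have D1: "D \<subseteq> topspace (inverse_limit X \<C>)"
    unfolding L D_def using hProd hL by auto
  have D2: "(inverse_limit X \<C>) closure_of D = topspace (inverse_limit X \<C>)"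
  proof (rule antisym)
    show "inverse_limit X \<C> closure_of D \<subseteq> topspace (inverse_limit X \<C>)"
      by (rule closure_of_subset_topspace)
    show "topspace (inverse_limit X \<C>) \<subseteq> inverse_limit X \<C> closure_of D"
    proof
      fix y assume y: "y \<in> topspace (inverse_limit X \<C>)"
      then have yP: "y \<in> topspace Prod" and yL: "y \<in> Lset" unfolding L by auto
      have "\<exists>z\<in>D. z \<in> T" if T: "y \<in> T" "openin (inverse_limit X \<C>) T" for T
      proof -
        obtain T' where T': "openin Prod T'" "T = T' \<inter> Lset"
          using T(2) unfolding L openin_subtopology by blast
        then have "y \<in> T'" using T by auto
        have "\<forall>x \<in> T'. \<exists>U. finite {i \<in> \<C>. U i \<noteq> topspace(QP_topology X i)} \<and>
                 (\<forall>i \<in> \<C>. openin (QP_topology X i) (U i)) \<and> x \<in> Pi\<^sub>E \<C> U \<and> Pi\<^sub>E \<C> U \<subseteq> T'"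
          using T'(1) unfolding Prod_def openin_product_topology_alt .
        then have "\<exists>U. finite {i \<in> \<C>. U i \<noteq> topspace(QP_topology X i)} \<and>
                 (\<forall>i \<in> \<C>. openin (QP_topology X i) (U i)) \<and> y \<in> Pi\<^sub>E \<C> U \<and> Pi\<^sub>E \<C> U \<subseteq> T'"
          using \<open>y \<in> T'\<close> by (rule bspec)
        then obtain Ub where Ub: "finite {i \<in> \<C>. Ub i \<noteq> topspace (QP_topology X i)}"
          "\<forall>i\<in>\<C>. openin (QP_topology X i) (Ub i)" "y \<in> PiE \<C> Ub" "PiE \<C> Ub \<subseteq> T'"
          by (elim exE conjE) (rule that)
        define F where "F = {i \<in> \<C>. Ub i \<noteq> topspace (QP_topology X i)}"
        have "\<forall>P\<in>\<C>. \<exists>Q. P = cl Q \<and> countable Q \<and> Q \<subseteq> ?T" using C cl_def by blast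
        then obtain qf where qf0: "\<And>P. P \<in> \<C> \<Longrightarrow> cl (qf P) = P \<and> countable (qf P) \<and> qf P \<subseteq> ?T"
          by metis
        have qf1: "cl (qf P) = P" and qf2: "countable (qf P)" and qf3: "qf P \<subseteq> ?T" if "P \<in> \<C>" for P
          using qf0[OF that] by simp_all
        define R where "R = cl (\<Union>P\<in>F. qf P)"
        have "countable (\<Union>P\<in>F. qf P)"
          using Ub(1) qf2 unfolding F_def by (intro countable_UN) (auto intro: countable_finite)
        moreover have "(\<Union>P\<in>F. qf P) \<subseteq> ?T" using qf3 unfolding F_def by auto
        ultimately have RC: "R \<in> \<C>" unfolding R_def by (rule clC)
        have FR: "P \<subseteq> R" if "P \<in> F" for P
        proof -
          have "P = cl (qf P)" using qf1 that unfolding F_def by auto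
          also have "\<dots> \<subseteq> R" unfolding R_def cl_def by (rule club_mono) (use that in auto)
          finally show ?thesis .
        qed
        have "y R \<in> topspace (QP_topology X R)" using yP RC unfolding Prod_def by (simp add: PiE_iff)
        then have "y R \<in> pquot X R" using top[OF RC] by simp
        then obtain x0 where x0: "x0 \<in> topspace X" "y R = pclass X R x0"
          unfolding pquot_def by auto
        have "h x0 \<in> PiE \<C> Ub"
        proof (rule PiE_I)
          fix P assume P: "P \<in> \<C>"
          show "h x0 P \<in> Ub P"
          proof (cases "P \<in> F")
            case True
            have e1: "h x0 P = pclass X P x0" using P unfolding h_def by simp
            have yL': "\<forall>P\<in>\<C>. \<forall>R'\<in>\<C>. P \<subseteq> R' \<longrightarrow> bond_map X P (y R') = y P"
              using yL unfolding Lset_def by simp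
            have e2: "bond_map X P (y R) = y P" using yL' RC P FR[OF True] by blast
            have e3: "bond_map X P (pclass X R x0) = pclass X P x0"
              by (rule bond_pclass[OF x0(1) FR[OF True]])
            have "h x0 P = y P" using e1 e2 e3 x0(2) by simp
            moreover have "y P \<in> Ub P" using Ub(3) P by (simp add: PiE_iff)
            ultimately show ?thesis by simp
          next
            case False
            then have "Ub P = pquot X P" using P top unfolding F_def by auto
            then show ?thesis using P x0(1) unfolding h_def pquot_def by auto
          qed
        next
          fix P assume "P \<notin> \<C>" then show "h x0 P = undefined" unfolding h_def by simp
        qed
        then have "h x0 \<in> T" using Ub(4) T'(2) hL[OF x0(1)] by auto
        then show ?thesis using x0(1) unfolding D_def by auto
      qed
      then show "y \<in> inverse_limit X \<C> closure_of D"
        using y unfolding closure_of_def by (intro CollectI conjI allI impI) auto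
    qed
  qed
  have pcont: "continuous_map X (QP_topology X P) (\<lambda>x. pclass X P x)" if P: "P \<in> \<C>" for P
    unfolding QP_topology_def
  proof (rule continuous_on_generated_topo)
    fix S assume "S \<in> insert (pquot X P) ((\<lambda>V. pclass X P ` V) ` P)"
    then consider "S = pquot X P" | W where "W \<in> P" "S = pclass X P ` W" by auto
    then show "openin X ((\<lambda>x. pclass X P x) -` S \<inter> topspace X)"
    proof cases
      case 1
      then have "(\<lambda>x. pclass X P x) -` S \<inter> topspace X = topspace X" unfolding pquot_def by auto
      then show ?thesis by simp
    next
      case 2
      have WT: "W \<in> ?T" using CT P 2 by auto
      have "(\<lambda>x. pclass X P x) -` S \<inter> topspace X = W"
        using 2 pclass_mem_image[OF _ cozero_subset[OF WT] 2(1)] cozero_subset[OF WT] by auto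
      then show ?thesis using cozero_open[OF WT] by simp
    qed
  next
    show "(\<lambda>x. pclass X P x) ` topspace X \<subseteq> \<Union> (insert (pquot X P) ((\<lambda>V. pclass X P ` V) ` P))"
      unfolding pquot_def by auto
  qed
  have hcontP: "continuous_map X Prod h"
    unfolding Prod_def continuous_map_componentwise
  proof
    show "h ` topspace X \<subseteq> extensional \<C>" unfolding h_def by auto
    show "\<forall>k\<in>\<C>. continuous_map X (QP_topology X k) (\<lambda>x. h x k)"
    proof
      fix k assume k: "k \<in> \<C>"
      have "(\<lambda>x. h x k) = (\<lambda>x. pclass X k x)" using k unfolding h_def by auto
      then show "continuous_map X (QP_topology X k) (\<lambda>x. h x k)" using pcont[OF k] by simp
    qed
  qed
  have SL: "subtopology (inverse_limit X \<C>) D = subtopology Prod (Lset \<inter> D)"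
    unfolding L by (simp add: subtopology_subtopology)
  have hcont: "continuous_map X (subtopology (inverse_limit X \<C>) D) h"
    unfolding SL continuous_map_in_subtopology using hcontP hL unfolding D_def by auto
  have hinj: "inj_on h (topspace X)"
  proof (rule inj_onI)
    fix x y assume x: "x \<in> topspace X" and y: "y \<in> topspace X" and hxy: "h x = h y"
    show "x = y"
    proof (rule ccontr)
      assume "x \<noteq> y"
      have op: "openin X (topspace X - {y})"
        using closedin_t1_singleton[OF assms(2) y] by (simp add: openin_diff)
      have xU: "x \<in> topspace X - {y}" using x \<open>x \<noteq> y\<close> by simp
      obtain W where W: "W \<in> ?T" "x \<in> W" "W \<subseteq> topspace X - {y}"
        using cozero_nbhd[OF assms(1) op xU] by blast
      define P where "P = cl {W}"
      have PC: "P \<in> \<C>" unfolding P_def using W by (intro clC) auto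
      have WP: "W \<in> P" unfolding P_def using clsup by blast
      have "h x P = h y P" using hxy by simp
      then have "pclass X P x = pclass X P y" using PC unfolding h_def by simp
      then have "x \<in> W \<longleftrightarrow> y \<in> W" using pclass_eq_iff[OF x y] WP by blast
      then show False using W by blast
    qed
  qed
  have hopen: "open_map X (subtopology (inverse_limit X \<C>) D) h"
    unfolding open_map_def
  proof (intro allI impI)
    fix U0 assume U0: "openin X U0"
    have "\<forall>x\<in>U0. \<exists>W\<in>?T. x \<in> W \<and> W \<subseteq> U0" using cozero_nbhd[OF assms(1) U0] by blast
    then obtain Wf where Wf: "\<And>x. x \<in> U0 \<Longrightarrow> Wf x \<in> ?T \<and> x \<in> Wf x \<and> Wf x \<subseteq> U0" by metis
    define N where "N x = {y \<in> topspace Prod. y (cl {Wf x}) \<in> pclass X (cl {Wf x}) ` Wf x}" for x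
    have PC: "cl {Wf x} \<in> \<C>" if "x \<in> U0" for x using Wf[OF that] by (intro clC) auto
    have WP: "Wf x \<in> cl {Wf x}" for x using clsup by blast
    have Nopen: "openin Prod (N x)" if "x \<in> U0" for x
      unfolding N_def
    proof (rule openin_continuous_map_preimage)
      show "continuous_map Prod (QP_topology X (cl {Wf x})) (\<lambda>y. y (cl {Wf x}))"
        unfolding Prod_def by (rule continuous_map_product_projection[OF PC[OF that]])
      show "openin (QP_topology X (cl {Wf x})) (pclass X (cl {Wf x}) ` Wf x)"
        unfolding QP_topology_def by (rule topology_generated_by_Basis) (use WP in blast)
    qed
    have "h ` U0 = (\<Union>x\<in>U0. N x) \<inter> (Lset \<inter> D)"
    proof
      show "h ` U0 \<subseteq> (\<Union>x\<in>U0. N x) \<inter> (Lset \<inter> D)"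
      proof
        fix z assume "z \<in> h ` U0"
        then obtain x where x: "x \<in> U0" "z = h x" by auto
        have xt: "x \<in> topspace X" using x U0 openin_subset by blast
        have "h x \<in> N x" unfolding N_def using hProd[OF xt] PC[OF x(1)] Wf[OF x(1)]
          unfolding h_def by auto
        then show "z \<in> (\<Union>x\<in>U0. N x) \<inter> (Lset \<inter> D)"
          using x xt hL unfolding D_def by auto
      qed
      show "(\<Union>x\<in>U0. N x) \<inter> (Lset \<inter> D) \<subseteq> h ` U0"
      proof
        fix z assume z: "z \<in> (\<Union>x\<in>U0. N x) \<inter> (Lset \<inter> D)"
        then obtain x x' where x: "x \<in> U0" "z \<in> N x" and x': "x' \<in> topspace X" "z = h x'"
          unfolding D_def by auto
        have "pclass X (cl {Wf x}) x' \<in> pclass X (cl {Wf x}) ` Wf x"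
          using x x' PC[OF x(1)] unfolding N_def h_def by auto
        then have "x' \<in> Wf x"
          using pclass_mem_image[OF x'(1) cozero_subset WP] Wf[OF x(1)] by blast
        then show "z \<in> h ` U0" using x' Wf[OF x(1)] by auto
      qed
    qed
    moreover have "openin Prod (\<Union>x\<in>U0. N x)" using Nopen by blast
    ultimately show "openin (subtopology (inverse_limit X \<C>) D) (h ` U0)"
      unfolding SL openin_subtopology by blast
  qed
  have "embedding_map X (subtopology (inverse_limit X \<C>) D) h"
    by (rule injective_open_imp_embedding_map[OF hcont hopen hinj])
  then have "X homeomorphic_space subtopology (subtopology (inverse_limit X \<C>) D) (h ` topspace X)"
    by (rule embedding_map_imp_homeomorphic_space)
  then have "X homeomorphic_space subtopology (inverse_limit X \<C>) D"
    unfolding subtopology_subtopology D_def Int_absorb .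
  then have "subtopology (inverse_limit X \<C>) D homeomorphic_space X"
    by (subst homeomorphic_space_sym)
  then show ?thesis using D1 D2 by (intro exI[of _ D] conjI)
qed

end
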